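(* Let $N\ge1$. The group $H'_{\mathbb{Z}/N\mathbb{Z}}=\bar\Gamma(2)/\Phi''_N$ has exponent $N$; in other words, for every $\gamma\in\bar\Gamma(2)$, one has $\gamma^N\in\Phi''_N$.
   Context: Let $\bar\Gamma(2)=\Gamma(2)/\{\pm1\}\subset\mathrm{PSL}_2(\mathbb{Z})$, freely generated by the classes $A$ of $\begin{pmatrix}1&2\\0&1\end{pmatrix}$ and $B$ of $\begin{pmatrix}1&0\\2&1\end{pmatrix}$; $C=ABA^{-1}B^{-1}$. Set $N'=N$ if $N$ is odd and $N'=N/2$ if $N$ even; set $N''=N'$ if $N$ is prime to $3$ and $N''=N'/3$ otherwise. $\Phi_N$ is the kernel of $\bar\Gamma(2)\to(\mathbb{Z}/N\mathbb{Z})^2$, $A\mapsto(1,0)$, $B\mapsto(0,1)$. Let $\bar\psi:\Phi_N\to(\mathbb{Z}/N'\mathbb{Z})^3$ be the group homomorphism which vanishes on $A^N$ and $B^N$ and satisfies $\bar\psi(A^iB^jC^kB^{-j}A^{-i})=(-ik,-jk,k)$ for all $i,j,k\in\mathbb{Z}$. Then $\Phi''_N$ is the kernel of the composition of $\bar\psi$ with the map $(\mathbb{Z}/N'\mathbb{Z})^3\to(\mathbb{Z}/N''\mathbb{Z})^2\times\mathbb{Z}/N'\mathbb{Z}$ reducing the first two coordinates modulo $N''$; it is a normal subgroup of $\bar\Gamma(2)$. *)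

theory Defs
  imports "HOL-Algebra.Group" "HOL-Number_Theory.Cong"
begin

text \<open>The group Gamma-bar(2) is free on A and B; we model it as the free group on two
letters, realised by reduced words.  A letter is a pair (g, s): g = False is A, g = True is B;
s = True means the inverse letter.\<close>

type_synonym fgword = "(bool \<times> bool) list"

definition cancels :: "bool \<times> bool \<Rightarrow> bool \<times> bool \<Rightarrow> bool" where
  "cancels x y \<longleftrightarrow> fst x = fst y \<and> snd x \<noteq> snd y"

fun reduced :: "fgword \<Rightarrow> bool" where
  "reduced [] = True"
| "reduced [x] = True"
| "reduced (x # y # ys) = (\<not> cancels x y \<and> reduced (y # ys))"

fun push :: "bool \<times> bool \<Rightarrow> fgword \<Rightarrow> fgword" where
  "push x [] = [x]"
| "push x (y # ys) = (if cancels x y then ys else x # y # ys)"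

definition F2 :: "fgword monoid" where
  "F2 = \<lparr>carrier = {w. reduced w}, monoid.mult = (\<lambda>u v. foldr push u v), one = []\<rparr>"

definition genA :: fgword where "genA = [(False, False)]"
definition genB :: fgword where "genB = [(True, False)]"

definition genC :: fgword where
  "genC = genA \<otimes>\<^bsub>F2\<^esub> genB \<otimes>\<^bsub>F2\<^esub> inv\<^bsub>F2\<^esub> genA \<otimes>\<^bsub>F2\<^esub> inv\<^bsub>F2\<^esub> genB"

definition expA :: "fgword \<Rightarrow> int" where
  "expA w = sum_list (map (\<lambda>(g, s). if g then 0 else (if s then -1 else 1)) w)"
definition expB :: "fgword \<Rightarrow> int" where
  "expB w = sum_list (map (\<lambda>(g, s). if g then (if s then -1 else 1) else 0) w)"

definition Phi :: "nat \<Rightarrow> fgword set" where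
  "Phi N = {w \<in> carrier F2. [expA w = 0] (mod int N) \<and> [expB w = 0] (mod int N)}"

definition Nprime :: "nat \<Rightarrow> nat" where
  "Nprime N = (if even N then N div 2 else N)"
definition Ndprime :: "nat \<Rightarrow> nat" where
  "Ndprime N = (if coprime N 3 then Nprime N else Nprime N div 3)"

text \<open>Elements of (Z/mZ)^3 are represented by integer triples; equality there is
componentwise congruence mod m.\<close>
definition cong3 :: "int \<times> int \<times> int \<Rightarrow> int \<times> int \<times> int \<Rightarrow> nat \<Rightarrow> bool" where
  "cong3 x y m \<longleftrightarrow> [fst x = fst y] (mod int m) \<and> [fst (snd x) = fst (snd y)] (mod int m)
                     \<and> [snd (snd x) = snd (snd y)] (mod int m)"

text \<open>psi is (a representative of) the homomorphism psi-bar : Phi_N \<rightarrow> (Z/N'Z)^3 characterised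
in the paper.\<close>
definition is_psibar :: "nat \<Rightarrow> (fgword \<Rightarrow> int \<times> int \<times> int) \<Rightarrow> bool" where
  "is_psibar N \<psi> \<longleftrightarrow>
     (\<forall>x \<in> Phi N. \<forall>y \<in> Phi N.
        cong3 (\<psi> (x \<otimes>\<^bsub>F2\<^esub> y))
              (fst (\<psi> x) + fst (\<psi> y), fst (snd (\<psi> x)) + fst (snd (\<psi> y)),
               snd (snd (\<psi> x)) + snd (snd (\<psi> y))) (Nprime N))
   \<and> cong3 (\<psi> (genA [^]\<^bsub>F2\<^esub> N)) (0, 0, 0) (Nprime N)
   \<and> cong3 (\<psi> (genB [^]\<^bsub>F2\<^esub> N)) (0, 0, 0) (Nprime N)
   \<and> (\<forall>i j k :: int.
        cong3 (\<psi> (genA [^]\<^bsub>F2\<^esub> i \<otimes>\<^bsub>F2\<^esub> genB [^]\<^bsub>F2\<^esub> j \<otimes>\<^bsub>F2\<^esub> genC [^]\<^bsub>F2\<^esub> k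
                   \<otimes>\<^bsub>F2\<^esub> genB [^]\<^bsub>F2\<^esub> (- j) \<otimes>\<^bsub>F2\<^esub> genA [^]\<^bsub>F2\<^esub> (- i)))
              (- i * k, - j * k, k) (Nprime N))"

definition Phi2 :: "nat \<Rightarrow> (fgword \<Rightarrow> int \<times> int \<times> int) \<Rightarrow> fgword set" where
  "Phi2 N \<psi> = {w \<in> Phi N. [fst (\<psi> w) = 0] (mod int (Ndprime N))
                         \<and> [fst (snd (\<psi> w)) = 0] (mod int (Ndprime N))
                         \<and> [snd (snd (\<psi> w)) = 0] (mod int (Nprime N))}"

end

theory Submission
  imports Defs
begin

lemma cancels_sym: "cancels x y \<Longrightarrow> cancels y x"
  by (auto simp: cancels_def)

lemma reduced_tl: "reduced (x # xs) \<Longrightarrow> reduced xs"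
  by (cases xs) auto

lemma push_reduced: "reduced v \<Longrightarrow> reduced (push x v)"
  by (cases v rule: reduced.cases) (auto simp: reduced_tl)

lemma foldr_push_reduced: "reduced v \<Longrightarrow> reduced (foldr push u v)"
  by (induct u) (auto simp: push_reduced)

lemma push_push_cancel:
  assumes "cancels x y" "reduced t" shows "push x (push y t) = t"
proof (cases t)
  case Nil then show ?thesis using assms by (auto simp: cancels_def)
next
  case (Cons z zs)
  show ?thesis
  proof (cases "cancels y z")
    case True
    then have xz: "x = z" using assms(1) by (cases x, cases y, cases z) (auto simp: cancels_def)
    show ?thesis
    proof (cases zs)
      case Nil then show ?thesis using True Cons xz by simp
    next
      case (Cons w ws)
      then show ?thesis using True \<open>t = z # zs\<close> xz assms(2) by auto
    qed
  next
    case False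
    then show ?thesis using Cons assms by auto
  qed
qed

lemma foldr_push_push:
  assumes "reduced z" "reduced w"
  shows "foldr push (push x z) w = push x (foldr push z w)"
proof (cases z)
  case Nil then show ?thesis by simp
next
  case (Cons y zs)
  show ?thesis
  proof (cases "cancels x y")
    case True
    have "reduced zs" using assms Cons reduced_tl by blast
    then have r: "reduced (foldr push zs w)" using assms foldr_push_reduced by blast
    show ?thesis using True Cons push_push_cancel[OF True r] by simp
  next
    case False then show ?thesis using Cons by simp
  qed
qed

lemma foldr_push_assoc:
  assumes "reduced u" "reduced v" "reduced w"
  shows "foldr push (foldr push u v) w = foldr push u (foldr push v w)"
  using assms
proof (induct u)
  case Nil then show ?case by simp
next
  case (Cons x u)
  have ru: "reduced u" using Cons reduced_tl by blast
  have "foldr push (foldr push (x # u) v) w = foldr push (push x (foldr push u v)) w" by simp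
  also have "\<dots> = push x (foldr push (foldr push u v) w)"
    using foldr_push_push foldr_push_reduced Cons by blast
  also have "\<dots> = push x (foldr push u (foldr push v w))" using Cons ru by simp
  finally show ?case by simp
qed

definition flipl :: "bool \<times> bool \<Rightarrow> bool \<times> bool" where "flipl x = (fst x, \<not> snd x)"

definition winv :: "fgword \<Rightarrow> fgword" where "winv w = rev (map flipl w)"

lemma winv_cancel: "reduced w \<Longrightarrow> foldr push (winv w) w = []"
proof (induct w)
  case Nil then show ?case by (simp add: winv_def)
next
  case (Cons x ws)
  have "reduced ws" using Cons reduced_tl by blast
  moreover have "cancels (flipl x) x" by (simp add: cancels_def flipl_def)
  ultimately show ?case using Cons push_push_cancel by (simp add: winv_def)
qed

lemma reduced_append1: "reduced (xs @ [y]) \<longleftrightarrow> reduced xs \<and> (xs \<noteq> [] \<longrightarrow> \<not> cancels (last xs) y)"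
  by (induct xs rule: reduced.induct) auto

lemma reduced_winv: "reduced w \<Longrightarrow> reduced (winv w)"
proof (induct w)
  case Nil then show ?case by (simp add: winv_def)
next
  case (Cons x ws)
  have "reduced ws" using Cons reduced_tl by blast
  then have "reduced (winv ws)" using Cons by blast
  moreover have "ws \<noteq> [] \<longrightarrow> \<not> cancels (hd ws) x" using Cons(2) by (cases ws) (auto dest: cancels_sym)
  ultimately show ?case
    by (auto simp: winv_def reduced_append1 last_rev last_map hd_map flipl_def cancels_def)
qed

lemma F2_group: "group F2"
proof (rule groupI)
  fix x y assume "x \<in> carrier F2" "y \<in> carrier F2"
  then show "x \<otimes>\<^bsub>F2\<^esub> y \<in> carrier F2" by (simp add: F2_def foldr_push_reduced)
next
  show "\<one>\<^bsub>F2\<^esub> \<in> carrier F2" by (simp add: F2_def)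
next
  fix x y z assume "x \<in> carrier F2" "y \<in> carrier F2" "z \<in> carrier F2"
  then show "x \<otimes>\<^bsub>F2\<^esub> y \<otimes>\<^bsub>F2\<^esub> z = x \<otimes>\<^bsub>F2\<^esub> (y \<otimes>\<^bsub>F2\<^esub> z)"
    by (simp add: F2_def foldr_push_assoc)
next
  fix x assume "x \<in> carrier F2" then show "\<one>\<^bsub>F2\<^esub> \<otimes>\<^bsub>F2\<^esub> x = x" by (simp add: F2_def)
next
  fix x assume "x \<in> carrier F2"
  then show "\<exists>y\<in>carrier F2. y \<otimes>\<^bsub>F2\<^esub> x = \<one>\<^bsub>F2\<^esub>"
    by (intro bexI[of _ "winv x"]) (auto simp: F2_def winv_cancel reduced_winv)
qed

interpretation F: group F2 by (rule F2_group)

abbreviation fm (infixl "\<cdot>" 70) where "x \<cdot> y \<equiv> x \<otimes>\<^bsub>F2\<^esub> y"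
abbreviation fp (infixr "^^^" 75) where "x ^^^ (i::int) \<equiv> x [^]\<^bsub>F2\<^esub> i"

lemma genA_c[simp]: "genA \<in> carrier F2" by (simp add: genA_def F2_def)
lemma genB_c[simp]: "genB \<in> carrier F2" by (simp add: genB_def F2_def)

lemma pw_comb1: "x \<in> carrier F2 \<Longrightarrow> x ^^^ i \<cdot> x ^^^ j = x ^^^ (i + j)"
  by (simp add: F.int_pow_mult)
lemma pw_comb2: "x \<in> carrier F2 \<Longrightarrow> y \<in> carrier F2 \<Longrightarrow> x ^^^ i \<cdot> (x ^^^ j \<cdot> y) = x ^^^ (i + j) \<cdot> y"
  by (simp add: F.int_pow_mult F.m_assoc)
lemma pw_inv: "x \<in> carrier F2 \<Longrightarrow> inv\<^bsub>F2\<^esub> (x ^^^ i) = x ^^^ (- i)"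
  by (simp add: F.int_pow_neg)

lemmas gsimps = F.m_assoc pw_comb1 pw_comb2 pw_inv F.inv_mult_group F.l_one F.r_one int_pow_0

lemma genC_eq: "genC = genA ^^^ 1 \<cdot> (genB ^^^ 1 \<cdot> (genA ^^^ (-1) \<cdot> genB ^^^ (-1)))"
  by (simp add: genC_def F.int_pow_neg F.m_assoc)

lemma genC_inv: "genC ^^^ (-1) = genB ^^^ 1 \<cdot> (genA ^^^ 1 \<cdot> (genB ^^^ (-1) \<cdot> genA ^^^ (-1)))"
  by (simp add: genC_eq F.int_pow_neg F.m_assoc F.inv_mult_group)

lemma genC_c[simp]: "genC \<in> carrier F2" by (simp add: genC_def)

definition Gw :: "int \<Rightarrow> int \<Rightarrow> int \<Rightarrow> fgword" where
  "Gw i j k = genA ^^^ i \<cdot> genB ^^^ j \<cdot> genC ^^^ k \<cdot> genB ^^^ (- j) \<cdot> genA ^^^ (- i)"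
definition Tw :: "int \<Rightarrow> int \<Rightarrow> fgword" where
  "Tw i j = genA ^^^ i \<cdot> genB ^^^ j \<cdot> genA ^^^ 1 \<cdot> genB ^^^ (- j) \<cdot> genA ^^^ (- i - 1)"

lemma Tw_step: "Tw i (j + 1) = Gw i j (-1) \<cdot> Tw i j"
  by (simp add: Tw_def Gw_def genC_inv gsimps algebra_simps del: F.int_pow_1)

definition lA :: "bool \<times> bool \<Rightarrow> int" where
  "lA x = (if fst x then 0 else (if snd x then -1 else 1))"
definition lB :: "bool \<times> bool \<Rightarrow> int" where
  "lB x = (if fst x then (if snd x then -1 else 1) else 0)"

lemma expA_Nil[simp]: "expA [] = 0" by (simp add: expA_def)
lemma expB_Nil[simp]: "expB [] = 0" by (simp add: expB_def)
lemma expA_Cons[simp]: "expA (x # w) = lA x + expA w"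
  by (cases x) (simp add: expA_def lA_def)
lemma expB_Cons[simp]: "expB (x # w) = lB x + expB w"
  by (cases x) (simp add: expB_def lB_def)

lemma lA_cancel: "cancels x y \<Longrightarrow> lA x + lA y = 0"
  by (cases x; cases y) (auto simp: cancels_def lA_def)
lemma lB_cancel: "cancels x y \<Longrightarrow> lB x + lB y = 0"
  by (cases x; cases y) (auto simp: cancels_def lB_def)

lemma expA_push: "expA (push x v) = lA x + expA v"
  by (cases v) (auto dest: lA_cancel simp: algebra_simps)
lemma expB_push: "expB (push x v) = lB x + expB v"
  by (cases v) (auto dest: lB_cancel simp: algebra_simps)

lemma expA_mult[simp]: "expA (u \<cdot> v) = expA u + expA v"
  by (induct u) (auto simp: F2_def expA_push)
lemma expB_mult[simp]: "expB (u \<cdot> v) = expB u + expB v"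
  by (induct u) (auto simp: F2_def expB_push)

lemma F2_one: "\<one>\<^bsub>F2\<^esub> = []" by (simp add: F2_def)

lemma expA_inv[simp]: "g \<in> carrier F2 \<Longrightarrow> expA (inv\<^bsub>F2\<^esub> g) = - expA g"
  using expA_mult[of g "inv\<^bsub>F2\<^esub> g"] by (simp add: F2_one)
lemma expB_inv[simp]: "g \<in> carrier F2 \<Longrightarrow> expB (inv\<^bsub>F2\<^esub> g) = - expB g"
  using expB_mult[of g "inv\<^bsub>F2\<^esub> g"] by (simp add: F2_one)

lemma expA_npow[simp]: "expA (g [^]\<^bsub>F2\<^esub> (n::nat)) = int n * expA g"
  by (induct n) (auto simp: F2_one algebra_simps)
lemma expB_npow[simp]: "expB (g [^]\<^bsub>F2\<^esub> (n::nat)) = int n * expB g"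
  by (induct n) (auto simp: F2_one algebra_simps)

lemma expA_pow[simp]: "g \<in> carrier F2 \<Longrightarrow> expA (g ^^^ i) = i * expA g"
  by (auto simp: int_pow_def2 simp del: pow_nat)
lemma expB_pow[simp]: "g \<in> carrier F2 \<Longrightarrow> expB (g ^^^ i) = i * expB g"
  by (auto simp: int_pow_def2 simp del: pow_nat)

lemma expA_gens[simp]: "expA genA = 1" "expA genB = 0" "expB genA = 0" "expB genB = 1"
  by (auto simp: genA_def genB_def lA_def lB_def)
lemma expC[simp]: "expA genC = 0" "expB genC = 0"
  by (auto simp: genC_def)

lemma Phi_sub: "Phi N \<subseteq> carrier F2" by (auto simp: Phi_def)

lemma Phi_I: "w \<in> carrier F2 \<Longrightarrow> expA w = 0 \<Longrightarrow> expB w = 0 \<Longrightarrow> w \<in> Phi N"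
  by (simp add: Phi_def)

lemma Phi_mult: "x \<in> Phi N \<Longrightarrow> y \<in> Phi N \<Longrightarrow> x \<cdot> y \<in> Phi N"
  by (auto simp: Phi_def cong_def mod_add_eq[symmetric])
lemma Phi_inv: "x \<in> Phi N \<Longrightarrow> inv\<^bsub>F2\<^esub> x \<in> Phi N"
  by (auto simp: Phi_def cong_def zmod_zminus1_eq_if)
lemma Phi_one: "\<one>\<^bsub>F2\<^esub> \<in> Phi N"
  by (auto simp: Phi_def F2_one F2_def)
lemma Phi_pow: "x \<in> Phi N \<Longrightarrow> x ^^^ k \<in> Phi N"
proof -
  assume x: "x \<in> Phi N"
  then have c: "x \<in> carrier F2" using Phi_sub by blast
  have "[k * expA x = k * 0] (mod int N)" "[k * expB x = k * 0] (mod int N)"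
    using x unfolding Phi_def by (auto intro!: cong_scalar_left simp del: mult_zero_right)
  then show ?thesis using c by (auto simp: Phi_def)
qed

lemma Tw_Phi: "Tw i j \<in> Phi N" by (rule Phi_I) (auto simp: Tw_def)
lemma Gw_Phi: "Gw i j k \<in> Phi N" by (rule Phi_I) (auto simp: Gw_def)

lemma foldr_push_snoc: "reduced (ys @ [x]) \<Longrightarrow> foldr push ys [x] = ys @ [x]"
proof (induct ys)
  case Nil then show ?case by simp
next
  case (Cons y ys)
  have "reduced (ys @ [x])" using Cons(2) reduced_tl by (metis append_Cons)
  then have e: "foldr push ys [x] = ys @ [x]" using Cons by blast
  show ?case
  proof (cases "ys @ [x]")
    case Nil then show ?thesis by simp
  next
    case (Cons z zs)
    then have "\<not> cancels y z" using \<open>reduced ((y # ys) @ [x])\<close> by simp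
    then show ?thesis using e Cons by simp
  qed
qed

lemma F2_rinduct_aux:
  assumes "P []" "\<And>g x. g \<in> carrier F2 \<Longrightarrow> P g \<Longrightarrow> P (g \<cdot> [x])"
  shows "w \<in> carrier F2 \<Longrightarrow> P w"
proof (induct w rule: rev_induct)
  case Nil then show ?case using assms by simp
next
  case (snoc x ys)
  then have r: "reduced (ys @ [x])" by (simp add: F2_def)
  then have "reduced ys" by (simp add: reduced_append1)
  then have c: "ys \<in> carrier F2" by (simp add: F2_def)
  then have "P ys" using snoc by blast
  then have "P (ys \<cdot> [x])" using assms c by blast
  moreover have "ys \<cdot> [x] = ys @ [x]" using r foldr_push_snoc by (simp add: F2_def)
  ultimately show ?case by simp
qed

lemma F2_rinduct[consumes 1, case_names Nil snoc]:
  assumes "w \<in> carrier F2" "P []" "\<And>g x. g \<in> carrier F2 \<Longrightarrow> P g \<Longrightarrow> P (g \<cdot> [x])"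
  shows "P w"
  using F2_rinduct_aux assms by blast

lemma invA: "inv\<^bsub>F2\<^esub> genA = [(False, True)]"
  by (rule F.inv_equality) (auto simp: F2_def genA_def cancels_def)
lemma invB: "inv\<^bsub>F2\<^esub> genB = [(True, True)]"
  by (rule F.inv_equality) (auto simp: F2_def genB_def cancels_def)

lemma wA: "[(False, False)] = genA ^^^ 1" using F.int_pow_1[OF genA_c] by (simp add: genA_def)
lemma wB: "[(True, False)] = genB ^^^ 1" using F.int_pow_1[OF genB_c] by (simp add: genB_def)
lemma wAi: "[(False, True)] = genA ^^^ (-1)" by (simp add: F.int_pow_neg invA)
lemma wBi: "[(True, True)] = genB ^^^ (-1)" by (simp add: F.int_pow_neg invB)

lemma letter_cases:
  obtains "x = (False, False)" "[x] = genA ^^^ 1" "lA x = 1" "lB x = 0"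
  | "x = (False, True)" "[x] = genA ^^^ (-1)" "lA x = -1" "lB x = 0"
  | "x = (True, False)" "[x] = genB ^^^ 1" "lA x = 0" "lB x = 1"
  | "x = (True, True)" "[x] = genB ^^^ (-1)" "lA x = 0" "lB x = -1"
  by (cases x; auto simp: wA wB wAi wBi lA_def lB_def simp del: F.int_pow_1)

definition rw :: "fgword \<Rightarrow> fgword" where
  "rw g = g \<cdot> inv\<^bsub>F2\<^esub> (genA ^^^ (expA g) \<cdot> genB ^^^ (expB g))"

lemma rw_Phi: "g \<in> carrier F2 \<Longrightarrow> rw g \<in> Phi N"
  by (rule Phi_I) (auto simp: rw_def)

lemma letter_c[simp]: "[x] \<in> carrier F2" by (simp add: F2_def)

lemma rw_step:
  assumes g: "g \<in> carrier F2"
  shows "rw (g \<cdot> [x]) = rw g \<cdot> (genA ^^^ (expA g) \<cdot> genB ^^^ (expB g) \<cdot> [x]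
            \<cdot> inv\<^bsub>F2\<^esub> (genA ^^^ (expA g + lA x) \<cdot> genB ^^^ (expB g + lB x)))"
proof -
  have "expA [x] = lA x" "expB [x] = lB x" by auto
  then show ?thesis using g by (simp add: rw_def gsimps del: F.int_pow_1)
qed

lemma pow_cong: "i = j \<Longrightarrow> x ^^^ i = x ^^^ j" by simp

lemma step_A: "genA ^^^ a \<cdot> genB ^^^ b \<cdot> genA ^^^ 1 \<cdot> inv\<^bsub>F2\<^esub> (genA ^^^ (a + 1) \<cdot> genB ^^^ (b + 0)) = Tw a b"
  by (simp add: Tw_def gsimps algebra_simps del: F.int_pow_1) (rule pow_cong, simp)
lemma step_Ai: "genA ^^^ a \<cdot> genB ^^^ b \<cdot> genA ^^^ (-1) \<cdot> inv\<^bsub>F2\<^esub> (genA ^^^ (a + -1) \<cdot> genB ^^^ (b + 0)) = inv\<^bsub>F2\<^esub> (Tw (a - 1) b)"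
  by (simp add: Tw_def gsimps algebra_simps del: F.int_pow_1)
lemma step_B: "genA ^^^ a \<cdot> genB ^^^ b \<cdot> genB ^^^ 1 \<cdot> inv\<^bsub>F2\<^esub> (genA ^^^ (a + 0) \<cdot> genB ^^^ (b + 1)) = \<one>\<^bsub>F2\<^esub>"
  by (simp add: gsimps algebra_simps del: F.int_pow_1)
lemma step_Bi: "genA ^^^ a \<cdot> genB ^^^ b \<cdot> genB ^^^ (-1) \<cdot> inv\<^bsub>F2\<^esub> (genA ^^^ (a + 0) \<cdot> genB ^^^ (b + -1)) = \<one>\<^bsub>F2\<^esub>"
  by (simp add: gsimps algebra_simps del: F.int_pow_1)

locale pc =
  fixes N :: nat and h :: "fgword \<Rightarrow> int" and m :: int
  assumes hom: "\<And>x y. x \<in> Phi N \<Longrightarrow> y \<in> Phi N \<Longrightarrow> m dvd h (x \<cdot> y) - (h x + h y)"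
begin

lemma h_one: "m dvd h \<one>\<^bsub>F2\<^esub>"
proof -
  have "m dvd h (\<one>\<^bsub>F2\<^esub> \<cdot> \<one>\<^bsub>F2\<^esub>) - (h \<one>\<^bsub>F2\<^esub> + h \<one>\<^bsub>F2\<^esub>)" using hom Phi_one by blast
  then have "m dvd - h \<one>\<^bsub>F2\<^esub>" by simp
  then show ?thesis by simp
qed

lemma h_inv: "x \<in> Phi N \<Longrightarrow> m dvd h (inv\<^bsub>F2\<^esub> x) + h x"
proof -
  assume x: "x \<in> Phi N"
  then have c: "x \<in> carrier F2" using Phi_sub by blast
  have "m dvd h (inv\<^bsub>F2\<^esub> x \<cdot> x) - (h (inv\<^bsub>F2\<^esub> x) + h x)" using hom x Phi_inv by blast
  then have "m dvd h \<one>\<^bsub>F2\<^esub> - (h (inv\<^bsub>F2\<^esub> x) + h x)" using c by simp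
  then have "m dvd h \<one>\<^bsub>F2\<^esub> - (h \<one>\<^bsub>F2\<^esub> - (h (inv\<^bsub>F2\<^esub> x) + h x))" using h_one dvd_diff by blast
  then show ?thesis by simp
qed

lemma h_mult: "x \<in> Phi N \<Longrightarrow> y \<in> Phi N \<Longrightarrow> m dvd h (x \<cdot> y) - h x - h y"
  using hom by (simp add: algebra_simps)

lemma h_npow: "x \<in> Phi N \<Longrightarrow> m dvd h (x [^]\<^bsub>F2\<^esub> (n::nat)) - int n * h x"
proof (induct n)
  case 0 then show ?case using h_one by simp
next
  case (Suc n)
  have p: "x [^]\<^bsub>F2\<^esub> n \<in> Phi N" using Phi_pow[OF Suc(2), of "int n"] by (simp add: int_pow_int)
  have "m dvd h (x [^]\<^bsub>F2\<^esub> n \<cdot> x) - h (x [^]\<^bsub>F2\<^esub> n) - h x" using h_mult p Suc(2) by blast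
  then have "m dvd (h (x [^]\<^bsub>F2\<^esub> n \<cdot> x) - h (x [^]\<^bsub>F2\<^esub> n) - h x) + (h (x [^]\<^bsub>F2\<^esub> n) - int n * h x)"
    using Suc by (simp only: dvd_add)
  moreover have "h (x [^]\<^bsub>F2\<^esub> Suc n) - int (Suc n) * h x = (h (x [^]\<^bsub>F2\<^esub> n \<cdot> x) - h (x [^]\<^bsub>F2\<^esub> n) - h x) + (h (x [^]\<^bsub>F2\<^esub> n) - int n * h x)"
    by (simp add: algebra_simps)
  ultimately show ?case by metis
qed

lemma h_pow: "x \<in> Phi N \<Longrightarrow> m dvd h (x ^^^ k) - k * h x"
proof -
  assume x: "x \<in> Phi N"
  then have c: "x \<in> carrier F2" using Phi_sub by blast
  show ?thesis
  proof (cases "k < 0")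
    case True
    have p: "x [^]\<^bsub>F2\<^esub> nat (-k) \<in> Phi N" using Phi_pow[OF x, of "-k"] True by (simp add: pow_nat)
    have e: "x ^^^ k = inv\<^bsub>F2\<^esub> (x [^]\<^bsub>F2\<^esub> nat (-k))" using True by (simp add: int_pow_def2 del: pow_nat)
    have "m dvd h (inv\<^bsub>F2\<^esub> (x [^]\<^bsub>F2\<^esub> nat (-k))) + h (x [^]\<^bsub>F2\<^esub> nat (-k))" using h_inv p by blast
    moreover have "m dvd h (x [^]\<^bsub>F2\<^esub> nat (-k)) - int (nat (-k)) * h x" using h_npow x by blast
    ultimately have "m dvd (h (inv\<^bsub>F2\<^esub> (x [^]\<^bsub>F2\<^esub> nat (-k))) + h (x [^]\<^bsub>F2\<^esub> nat (-k)))
       - (h (x [^]\<^bsub>F2\<^esub> nat (-k)) - int (nat (-k)) * h x)" by (rule dvd_diff)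
    then show ?thesis using True e by (simp add: algebra_simps)
  next
    case False
    then show ?thesis using h_npow[OF x, of "nat k"] by (simp add: int_pow_def2 del: pow_nat)
  qed
qed

end

lemma dvd3: "(m::int) dvd a \<Longrightarrow> m dvd b \<Longrightarrow> m dvd c \<Longrightarrow> x = a + b + c \<Longrightarrow> m dvd x"
  by simp

locale pc2 = pc +
  fixes g :: "int \<Rightarrow> int \<Rightarrow> int \<Rightarrow> int" and tf :: "int \<Rightarrow> int \<Rightarrow> int"
  assumes hG: "\<And>i j k. m dvd h (Gw i j k) - g i j k"
    and tf0: "\<And>i. tf i 0 = 0" and tfs: "\<And>i j. tf i (j + 1) = g i j (-1) + tf i j"
begin

lemma Tw0: "Tw i 0 = \<one>\<^bsub>F2\<^esub>"
  by (simp add: Tw_def gsimps del: F.int_pow_1)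

lemma hT: "m dvd h (Tw i j) - tf i j"
proof (induct j rule: int_induct[where k=0])
  case base then show ?case using h_one by (simp add: Tw0 tf0)
next
  case (step1 j)
  have "m dvd h (Gw i j (-1) \<cdot> Tw i j) - h (Gw i j (-1)) - h (Tw i j)"
    using h_mult Gw_Phi Tw_Phi by blast
  then show ?case
    by (rule dvd3[OF _ hG[of i j "-1"] step1(2)]) (simp add: Tw_step tfs)
next
  case (step2 j)
  have e: "Tw i j = Gw i (j - 1) (-1) \<cdot> Tw i (j - 1)" using Tw_step[of i "j - 1"] by simp
  have t: "tf i j = g i (j - 1) (-1) + tf i (j - 1)" using tfs[of i "j - 1"] by simp
  have "m dvd h (Gw i (j - 1) (-1) \<cdot> Tw i (j - 1)) - h (Gw i (j - 1) (-1)) - h (Tw i (j - 1))"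
    using h_mult Gw_Phi Tw_Phi by blast
  then have a: "m dvd - (h (Gw i (j - 1) (-1) \<cdot> Tw i (j - 1)) - h (Gw i (j - 1) (-1)) - h (Tw i (j - 1)))"
    by (metis dvd_minus_iff)
  have b: "m dvd - (h (Gw i (j - 1) (-1)) - g i (j - 1) (-1))" using hG[of i "j - 1" "-1"] by (metis dvd_minus_iff)
  show ?case
    by (rule dvd3[OF a b step2(2)]) (simp add: e t)
qed

definition sv :: "int \<Rightarrow> int \<Rightarrow> bool \<times> bool \<Rightarrow> int" where
  "sv a b x = (if x = (False, False) then tf a b else if x = (False, True) then - tf (a - 1) b else 0)"

lemma hr:
  assumes P0: "P [] = 0"
    and Ps: "\<And>w x. w \<in> carrier F2 \<Longrightarrow> P (w \<cdot> [x]) = P w + sv (expA w) (expB w) x"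
    and w: "w \<in> carrier F2"
  shows "m dvd h (rw w) - P w"
  using w
proof (induct w rule: F2_rinduct)
  case Nil
  have n: "[] \<in> carrier F2" by (simp add: F2_def)
  have "rw [] = \<one>\<^bsub>F2\<^esub>" unfolding rw_def using n by simp (simp add: F2_one)
  then show ?case using h_one P0 by simp
next
  case (snoc w x)
  define a where "a = expA w"
  define b where "b = expB w"
  define S where "S = genA ^^^ a \<cdot> genB ^^^ b \<cdot> [x]
            \<cdot> inv\<^bsub>F2\<^esub> (genA ^^^ (a + lA x) \<cdot> genB ^^^ (b + lB x))"
  have e: "rw (w \<cdot> [x]) = rw w \<cdot> S" using rw_step[OF snoc(1), of x] by (simp add: S_def a_def b_def)
  have SP: "S \<in> Phi N \<and> m dvd h S - sv a b x"
  proof (cases x rule: letter_cases)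
    case 1
    then have "S = Tw a b" using step_A[of a b] by (simp add: S_def del: F.int_pow_1)
    then show ?thesis using Tw_Phi hT 1 by (simp add: sv_def)
  next
    case 2
    then have Se: "S = inv\<^bsub>F2\<^esub> (Tw (a - 1) b)" using step_Ai[of a b] by (simp add: S_def del: F.int_pow_1)
    moreover have "m dvd h (inv\<^bsub>F2\<^esub> (Tw (a - 1) b)) + h (Tw (a - 1) b)" using h_inv Tw_Phi by blast
    moreover have "m dvd h (Tw (a - 1) b) - tf (a - 1) b" using hT by blast
    ultimately have "m dvd (h (inv\<^bsub>F2\<^esub> (Tw (a - 1) b)) + h (Tw (a - 1) b)) - (h (Tw (a - 1) b) - tf (a - 1) b)"
      using dvd_diff by blast
    moreover have "sv a b x = - tf (a - 1) b" using 2 by (simp add: sv_def)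
    ultimately show ?thesis using Tw_Phi Phi_inv Se by (simp add: algebra_simps)
  next
    case 3
    then have "S = \<one>\<^bsub>F2\<^esub>" using step_B[of a b] by (simp add: S_def del: F.int_pow_1)
    then show ?thesis using Phi_one h_one 3 by (simp add: sv_def)
  next
    case 4
    then have "S = \<one>\<^bsub>F2\<^esub>" using step_Bi[of a b] by (simp add: S_def del: F.int_pow_1)
    then show ?thesis using Phi_one h_one 4 by (simp add: sv_def)
  qed
  have "m dvd h (rw w \<cdot> S) - h (rw w) - h S" using h_mult rw_Phi[OF snoc(1)] SP by blast
  then show ?case
    by (rule dvd3[OF _ snoc(2)]) (use SP snoc(1) in \<open>auto simp: e Ps[OF snoc(1)] a_def b_def\<close>)
qed

end

type_synonym g5 = "int \<times> int \<times> int \<times> int \<times> int"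

definition c2 :: "int \<Rightarrow> int" where "c2 x = x * (x - 1) div 2"

lemma two_c2: "2 * c2 x = x * (x - 1)"
proof -
  have "even (x * (x - 1))" by simp
  then show ?thesis unfolding c2_def by simp
qed

lemma c2_add: "c2 (x + y) = c2 x + c2 y + x * y"
proof -
  have "2 * c2 (x + y) = 2 * (c2 x + c2 y + x * y)"
    unfolding distrib_left two_c2 by (simp add: algebra_simps)
  then show ?thesis by simp
qed

lemma c2_mul: "c2 (x * y) = x * x * c2 y + y * c2 x"
proof -
  have "2 * c2 (x * y) = 2 * (x * x * c2 y + y * c2 x)"
    unfolding distrib_left two_c2 mult.left_commute[of 2] two_c2 by (simp add: algebra_simps)
  then show ?thesis by simp
qed

lemma c2_simps[simp]: "c2 0 = 0" "c2 1 = 0" "c2 (-1) = 1"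
  by (simp_all add: c2_def)

fun mulG :: "g5 \<Rightarrow> g5 \<Rightarrow> g5" where
  "mulG (a0, b0, q1, q2, q3) (a, b, p1, p2, p3) =
     (a0 + a, b0 + b, q1 + p1 - a0 * p3 + b0 * c2 a + a0 * b0 * a,
      q2 + p2 - b0 * p3 + a * c2 b0, q3 + p3 - a * b0)"

definition e0 :: g5 where "e0 = (0, 0, 0, 0, 0)"

lemma mulG_assoc: "mulG (mulG x y) z = mulG x (mulG y z)"
  by (cases x; cases y; cases z) (simp add: c2_add algebra_simps)

lemma mulG_e0[simp]: "mulG e0 y = y" "mulG y e0 = y"
  by (cases y; simp add: e0_def)+

definition Lt :: "bool \<times> bool \<Rightarrow> g5" where "Lt x = (lA x, lB x, 0, 0, 0)"

lemma Lt_cancel: "cancels x y \<Longrightarrow> mulG (Lt x) (Lt y) = e0"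
  by (cases x; cases y) (auto simp: cancels_def Lt_def lA_def lB_def e0_def)

definition Th :: "fgword \<Rightarrow> g5" where "Th w = foldr (\<lambda>x acc. mulG (Lt x) acc) w e0"

lemma Th_Nil[simp]: "Th [] = e0" by (simp add: Th_def)
lemma Th_Cons[simp]: "Th (x # w) = mulG (Lt x) (Th w)" by (simp add: Th_def)

lemma Th_push: "Th (push x v) = mulG (Lt x) (Th v)"
proof (cases v)
  case Nil then show ?thesis by simp
next
  case (Cons y ys)
  show ?thesis
  proof (cases "cancels x y")
    case True
    then have "mulG (Lt x) (Th v) = mulG (mulG (Lt x) (Lt y)) (Th ys)" using Cons by (simp add: mulG_assoc)
    then show ?thesis using True Cons Lt_cancel by simp
  next
    case False then show ?thesis using Cons by simp
  qed
qed

lemma Th_mult: "Th (u \<cdot> v) = mulG (Th u) (Th v)"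
  by (induct u) (auto simp: F2_def Th_push mulG_assoc)

lemma Th_fst: "fst (Th w) = expA w"
proof (induct w)
  case Nil then show ?case by (simp add: e0_def)
next
  case (Cons x w)
  obtain a b p1 p2 p3 where "Th w = (a, b, p1, p2, p3)" by (cases "Th w") auto
  then show ?case using Cons by (simp add: Lt_def)
qed

lemma Th_snd: "fst (snd (Th w)) = expB w"
proof (induct w)
  case Nil then show ?case by (simp add: e0_def)
next
  case (Cons x w)
  obtain a b p1 p2 p3 where "Th w = (a, b, p1, p2, p3)" by (cases "Th w") auto
  then show ?case using Cons by (simp add: Lt_def)
qed

lemma Th_eq: "Th w = (expA w, expB w, fst (snd (snd (Th w))), fst (snd (snd (snd (Th w)))), snd (snd (snd (snd (Th w)))))"
  using Th_fst[of w] Th_snd[of w] by (cases "Th w") auto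

definition P1 :: "fgword \<Rightarrow> int" where "P1 w = fst (snd (snd (Th w)))"
definition P2 :: "fgword \<Rightarrow> int" where "P2 w = fst (snd (snd (snd (Th w))))"
definition P3 :: "fgword \<Rightarrow> int" where "P3 w = snd (snd (snd (snd (Th w))))"

lemma Th_eq2: "Th w = (expA w, expB w, P1 w, P2 w, P3 w)"
  using Th_eq unfolding P1_def P2_def P3_def .

lemma Th_snoc: "Th (w \<cdot> [x]) = mulG (Th w) (Lt x)"
  by (simp add: Th_mult)

lemma P_snoc:
  "P1 (w \<cdot> [x]) = P1 w + (if x = (False, False) then expA w * expB w else if x = (False, True) then - ((expA w - 1) * expB w) else 0)"
  "P2 (w \<cdot> [x]) = P2 w + (if x = (False, False) then c2 (expB w) else if x = (False, True) then - c2 (expB w) else 0)"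
  "P3 (w \<cdot> [x]) = P3 w + (if x = (False, False) then - expB w else if x = (False, True) then - (- expB w) else 0)"
proof -
  have e: "Th (w \<cdot> [x]) = mulG (expA w, expB w, P1 w, P2 w, P3 w) (lA x, lB x, 0, 0, 0)"
    by (simp add: Th_snoc Lt_def Th_eq2[of w, symmetric])
  show "P1 (w \<cdot> [x]) = P1 w + (if x = (False, False) then expA w * expB w else if x = (False, True) then - ((expA w - 1) * expB w) else 0)"
    using e by (cases x rule: letter_cases) (auto simp: P1_def algebra_simps)
  show "P2 (w \<cdot> [x]) = P2 w + (if x = (False, False) then c2 (expB w) else if x = (False, True) then - c2 (expB w) else 0)"
    using e by (cases x rule: letter_cases) (auto simp: P2_def algebra_simps)
  show "P3 (w \<cdot> [x]) = P3 w + (if x = (False, False) then - expB w else if x = (False, True) then - (- expB w) else 0)"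
    using e by (cases x rule: letter_cases) (auto simp: P3_def algebra_simps)
qed

lemma P_Nil: "P1 [] = 0" "P2 [] = 0" "P3 [] = 0"
  by (simp_all add: P1_def P2_def P3_def e0_def)

lemma cop3: "coprime (n::nat) 3 \<longleftrightarrow> \<not> 3 dvd n"
proof -
  have g: "gcd n 3 = gcd 3 (n mod 3)" by (rule gcd_red_nat)
  have "n mod 3 = 0 \<or> n mod 3 = 1 \<or> n mod 3 = 2" by presburger
  moreover have "gcd (3::nat) 2 = 1" by (simp add: gcd_red_nat[of 3 2])
  moreover have "gcd (3::nat) 1 = 1" by simp
  moreover have "gcd (3::nat) 0 = 3" by simp
  ultimately show ?thesis unfolding coprime_iff_gcd_eq_1 g
    by (metis dvd_eq_mod_eq_0 numeral_One numeral_eq_iff semiring_norm(86))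
qed

fun powG :: "g5 \<Rightarrow> nat \<Rightarrow> g5" where
  "powG x 0 = e0"
| "powG x (Suc n) = mulG (powG x n) x"

lemma Th_pow: "Th (g [^]\<^bsub>F2\<^esub> (n::nat)) = powG (Th g) n"
  by (induct n) (auto simp: F2_one Th_mult)

definition S2 :: "nat \<Rightarrow> int" where "S2 n = (\<Sum>k<n. int k * int k)"
definition C3 :: "nat \<Rightarrow> int" where "C3 n = (\<Sum>k<n. c2 (int k))"

lemma powG_closed:
  "powG (a, b, p1, p2, p3) n =
    (int n * a, int n * b,
     int n * p1 - a * p3 * c2 (int n) + b * c2 a * c2 (int n) + a * a * b * S2 n,
     int n * p2 - b * p3 * c2 (int n) + a * (c2 b * S2 n + b * C3 n),
     int n * p3 - a * b * c2 (int n))"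
proof (induct n)
  case 0 then show ?case by (simp add: e0_def S2_def C3_def)
next
  case (Suc n)
  have c: "c2 (int n * b) = int n * int n * c2 b + b * c2 (int n)" by (rule c2_mul)
  have i: "int (Suc n) = int n + 1" by simp
  have d: "c2 (int (Suc n)) = c2 (int n) + int n" unfolding i using c2_add[of "int n" 1] by simp
  have S: "S2 (Suc n) = S2 n + int n * int n" by (simp add: S2_def)
  have C: "C3 (Suc n) = C3 n + c2 (int n)" by (simp add: C3_def)
  have d2: "c2 (int n + 1) = c2 (int n) + int n" using c2_add[of "int n" 1] by simp
  show ?case
    unfolding powG.simps Suc mulG.simps S C i d2
    unfolding c[unfolded mult.commute[of "int n" b]] mult.commute[of "int n" b] 
    apply (simp only: prod.inject)
    apply (intro conjI)
    by (simp_all add: c algebra_simps)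
qed

lemma S2_closed: "6 * S2 n = int n * (int n - 1) * (2 * int n - 1)"
  by (induct n) (auto simp: S2_def algebra_simps)

lemma C3_closed: "6 * C3 n = int n * (int n - 1) * (int n - 2)"
proof (induct n)
  case 0 then show ?case by (simp add: C3_def)
next
  case (Suc n)
  have "6 * C3 (Suc n) = 6 * C3 n + 3 * (2 * c2 (int n))" by (simp add: C3_def algebra_simps)
  then show ?case using Suc by (simp only: two_c2) (simp add: algebra_simps)
qed

lemma case_div:
  assumes "int (Ndprime N) = d" "int (Nprime N) = m" "m = d * u" "int N = m * v"
    "int N * (int N - 1) = 2 * m * z" "int N * (int N - 1) * (2 * int N - 1) = 6 * d * ws"
    "int N * (int N - 1) * (int N - 2) = 6 * d * wc"
  shows "int (Ndprime N) dvd int (Nprime N) \<and> int (Nprime N) dvd int N \<and> int (Nprime N) dvd c2 (int N)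
     \<and> int (Ndprime N) dvd S2 N \<and> int (Ndprime N) dvd C3 N"
proof -
  have "2 * c2 (int N) = 2 * (m * z)" using two_c2[of "int N"] assms by simp
  moreover have "6 * S2 N = 6 * (d * ws)" using S2_closed[of N] assms by simp
  moreover have "6 * C3 N = 6 * (d * wc)" using C3_closed[of N] assms by simp
  ultimately show ?thesis using assms by auto
qed

lemma divs:
  assumes "N \<ge> 1"
  shows "int (Ndprime N) dvd int (Nprime N) \<and> int (Nprime N) dvd int N \<and> int (Nprime N) dvd c2 (int N)
     \<and> int (Ndprime N) dvd S2 N \<and> int (Ndprime N) dvd C3 N"
proof -
  define q where "q = N div 6"
  define r where "r = N mod 6"
  have qr: "N = 6 * q + r" "r < 6" unfolding q_def r_def by simp_all
  define Q where "Q = int q"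
  have NQ: "int N = 6 * Q + int r" using qr Q_def by simp
  have "r = 0 \<or> r = 1 \<or> r = 2 \<or> r = 3 \<or> r = 4 \<or> r = 5" using qr by auto
  then show ?thesis
  proof (elim disjE)
    assume r: "r = 0"
    have a: "Nprime N = 3 * q" using qr r by (simp add: Nprime_def)
    have b: "Ndprime N = q" using qr r by (simp add: Ndprime_def Nprime_def cop3)
    show ?thesis
      by (rule case_div[where d = Q and m = "3 * Q" and u = 3 and v = 2 and z = "6 * Q - 1"
          and ws = "(6 * Q - 1) * (12 * Q - 1)" and wc = "(6 * Q - 1) * (6 * Q - 2)"])
         (use a b NQ r Q_def in \<open>simp_all add: algebra_simps\<close>)
  next
    assume r: "r = 1"
    have a: "Nprime N = 6 * q + 1" using qr r by (simp add: Nprime_def)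
    have b: "Ndprime N = 6 * q + 1" using qr r by (simp add: Ndprime_def Nprime_def cop3; presburger)
    show ?thesis
      by (rule case_div[where d = "6 * Q + 1" and m = "6 * Q + 1" and u = 1 and v = 1 and z = "3 * Q"
          and ws = "Q * (12 * Q + 1)" and wc = "Q * (6 * Q - 1)"])
         (use a b NQ r Q_def in \<open>simp_all add: algebra_simps\<close>)
  next
    assume r: "r = 2"
    have a: "Nprime N = 3 * q + 1" using qr r by (simp add: Nprime_def)
    have b: "Ndprime N = 3 * q + 1" using qr r by (simp add: Ndprime_def Nprime_def cop3; presburger)
    show ?thesis
      by (rule case_div[where d = "3 * Q + 1" and m = "3 * Q + 1" and u = 1 and v = 2 and z = "6 * Q + 1"
          and ws = "(6 * Q + 1) * (4 * Q + 1)" and wc = "2 * Q * (6 * Q + 1)"])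
         (use a b NQ r Q_def in \<open>simp_all add: algebra_simps\<close>)
  next
    assume r: "r = 3"
    have a: "Nprime N = 6 * q + 3" using qr r by (simp add: Nprime_def)
    have b: "Ndprime N = 2 * q + 1" using qr r by (simp add: Ndprime_def Nprime_def cop3)
    show ?thesis
      by (rule case_div[where d = "2 * Q + 1" and m = "6 * Q + 3" and u = 3 and v = 1 and z = "3 * Q + 1"
          and ws = "(3 * Q + 1) * (12 * Q + 5)" and wc = "(3 * Q + 1) * (6 * Q + 1)"])
         (use a b NQ r Q_def in \<open>simp_all add: algebra_simps\<close>)
  next
    assume r: "r = 4"
    have a: "Nprime N = 3 * q + 2" using qr r by (simp add: Nprime_def)
    have b: "Ndprime N = 3 * q + 2" using qr r by (simp add: Ndprime_def Nprime_def cop3; presburger)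
    show ?thesis
      by (rule case_div[where d = "3 * Q + 2" and m = "3 * Q + 2" and u = 1 and v = 2 and z = "6 * Q + 3"
          and ws = "(2 * Q + 1) * (12 * Q + 7)" and wc = "(2 * Q + 1) * (6 * Q + 2)"])
         (use a b NQ r Q_def in \<open>simp_all add: algebra_simps\<close>)
  next
    assume r: "r = 5"
    have a: "Nprime N = 6 * q + 5" using qr r by (simp add: Nprime_def)
    have b: "Ndprime N = 6 * q + 5" using qr r by (simp add: Ndprime_def Nprime_def cop3; presburger)
    show ?thesis
      by (rule case_div[where d = "6 * Q + 5" and m = "6 * Q + 5" and u = 1 and v = 1 and z = "3 * Q + 2"
          and ws = "(3 * Q + 2) * (4 * Q + 3)" and wc = "(3 * Q + 2) * (2 * Q + 1)"])
         (use a b NQ r Q_def in \<open>simp_all add: algebra_simps\<close>)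
  qed
qed

context pc2
begin

lemma h_final:
  assumes P0: "P [] = 0"
    and Ps: "\<And>w x. w \<in> carrier F2 \<Longrightarrow> P (w \<cdot> [x]) = P w + sv (expA w) (expB w) x"
    and hA: "m dvd h (genA [^]\<^bsub>F2\<^esub> N)" and hB: "m dvd h (genB [^]\<^bsub>F2\<^esub> N)"
    and w: "w \<in> Phi N"
  shows "m dvd h w - P w"
proof -
  have wc: "w \<in> carrier F2" using w Phi_sub by blast
  obtain ka where ka: "expA w = int N * ka" using w by (auto simp: Phi_def cong_0_iff)
  obtain kb where kb: "expB w = int N * kb" using w by (auto simp: Phi_def cong_0_iff)
  have AN: "genA [^]\<^bsub>F2\<^esub> N \<in> Phi N" unfolding Phi_def by (auto simp: cong_0_iff)
  have BN: "genB [^]\<^bsub>F2\<^esub> N \<in> Phi N" unfolding Phi_def by (auto simp: cong_0_iff)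
  have qa: "genA ^^^ (expA w) = (genA [^]\<^bsub>F2\<^esub> N) ^^^ ka"
    unfolding ka by (simp add: F.int_pow_pow int_pow_int[symmetric])
  have qb: "genB ^^^ (expB w) = (genB [^]\<^bsub>F2\<^esub> N) ^^^ kb"
    unfolding kb by (simp add: F.int_pow_pow int_pow_int[symmetric])
  define QA where "QA = (genA [^]\<^bsub>F2\<^esub> N) ^^^ ka"
  define QB where "QB = (genB [^]\<^bsub>F2\<^esub> N) ^^^ kb"
  have QAP: "QA \<in> Phi N" unfolding QA_def using Phi_pow AN by blast
  have QBP: "QB \<in> Phi N" unfolding QB_def using Phi_pow BN by blast
  have hQA: "m dvd h QA"
  proof -
    have "m dvd h QA - ka * h (genA [^]\<^bsub>F2\<^esub> N)" unfolding QA_def using h_pow AN by blast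
    moreover have "m dvd ka * h (genA [^]\<^bsub>F2\<^esub> N)" using hA by simp
    ultimately have "m dvd (h QA - ka * h (genA [^]\<^bsub>F2\<^esub> N)) + ka * h (genA [^]\<^bsub>F2\<^esub> N)" by (rule dvd_add)
    then show ?thesis by simp
  qed
  have hQB: "m dvd h QB"
  proof -
    have "m dvd h QB - kb * h (genB [^]\<^bsub>F2\<^esub> N)" unfolding QB_def using h_pow BN by blast
    moreover have "m dvd kb * h (genB [^]\<^bsub>F2\<^esub> N)" using hB by simp
    ultimately have "m dvd (h QB - kb * h (genB [^]\<^bsub>F2\<^esub> N)) + kb * h (genB [^]\<^bsub>F2\<^esub> N)" by (rule dvd_add)
    then show ?thesis by simp
  qed
  have qc: "QA \<cdot> QB \<in> carrier F2" using QAP QBP Phi_sub Phi_mult by blast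
  have e0: "\<And>q. q \<in> carrier F2 \<Longrightarrow> w = w \<cdot> inv\<^bsub>F2\<^esub> q \<cdot> q"
    using wc by (simp add: F.m_assoc)
  have e: "w = rw w \<cdot> (QA \<cdot> QB)"
    unfolding rw_def QA_def[symmetric] QB_def[symmetric] qa qb
    using e0[OF qc] .
  have QP: "QA \<cdot> QB \<in> Phi N" using QAP QBP Phi_mult by blast
  have 1: "m dvd h (rw w \<cdot> (QA \<cdot> QB)) - h (rw w) - h (QA \<cdot> QB)" using h_mult rw_Phi[OF wc] QP by blast
  have 2: "m dvd h (QA \<cdot> QB) - h QA - h QB" using h_mult QAP QBP by blast
  have 3: "m dvd h (rw w) - P w" using hr[OF P0 Ps wc] .
  have "m dvd (h (rw w \<cdot> (QA \<cdot> QB)) - h (rw w) - h (QA \<cdot> QB)) + (h (QA \<cdot> QB) - h QA - h QB) + (h (rw w) - P w) + h QA + h QB"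
    using 1 2 3 hQA hQB by (intro dvd_add) 
  moreover have "(h (rw w \<cdot> (QA \<cdot> QB)) - h (rw w) - h (QA \<cdot> QB)) + (h (QA \<cdot> QB) - h QA - h QB) + (h (rw w) - P w) + h QA + h QB
     = h w - P w" using e by simp
  ultimately show ?thesis by simp
qed

end

lemma P_pow:
  assumes "g \<in> carrier F2"
  shows "P1 (g [^]\<^bsub>F2\<^esub> N) = int N * P1 g - expA g * P3 g * c2 (int N) + expB g * c2 (expA g) * c2 (int N) + expA g * expA g * expB g * S2 N"
    "P2 (g [^]\<^bsub>F2\<^esub> N) = int N * P2 g - expB g * P3 g * c2 (int N) + expA g * (c2 (expB g) * S2 N + expB g * C3 N)"
    "P3 (g [^]\<^bsub>F2\<^esub> N) = int N * P3 g - expA g * expB g * c2 (int N)"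
proof -
  have "Th (g [^]\<^bsub>F2\<^esub> N) = powG (expA g, expB g, P1 g, P2 g, P3 g) N"
    using Th_pow Th_eq2 by metis
  then have "(expA (g [^]\<^bsub>F2\<^esub> N), expB (g [^]\<^bsub>F2\<^esub> N), P1 (g [^]\<^bsub>F2\<^esub> N), P2 (g [^]\<^bsub>F2\<^esub> N), P3 (g [^]\<^bsub>F2\<^esub> N))
     = powG (expA g, expB g, P1 g, P2 g, P3 g) N" using Th_eq2 by metis
  then show "P1 (g [^]\<^bsub>F2\<^esub> N) = int N * P1 g - expA g * P3 g * c2 (int N) + expB g * c2 (expA g) * c2 (int N) + expA g * expA g * expB g * S2 N"
    "P2 (g [^]\<^bsub>F2\<^esub> N) = int N * P2 g - expB g * P3 g * c2 (int N) + expA g * (c2 (expB g) * S2 N + expB g * C3 N)"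
    "P3 (g [^]\<^bsub>F2\<^esub> N) = int N * P3 g - expA g * expB g * c2 (int N)"
    unfolding powG_closed by simp_all
qed

theorem proposition10:
  fixes N :: nat and \<psi> :: "fgword \<Rightarrow> int \<times> int \<times> int"
  assumes "N \<ge> 1" and "is_psibar N \<psi>"
  shows "(\<forall>\<gamma> \<in> carrier F2. \<gamma> [^]\<^bsub>F2\<^esub> N \<in> Phi2 N \<psi>)
       \<and> (\<forall>n::nat. 0 < n \<and> n < N \<longrightarrow> \<not> (\<forall>\<gamma> \<in> carrier F2. \<gamma> [^]\<^bsub>F2\<^esub> n \<in> Phi2 N \<psi>))"
proof
  define m where "m = int (Nprime N)"
  define d where "d = int (Ndprime N)"
  have dv: "d dvd m" "m dvd int N" "m dvd c2 (int N)" "d dvd S2 N" "d dvd C3 N"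
    using divs[OF assms(1)] unfolding m_def d_def by auto
  have dN: "d dvd int N" "d dvd c2 (int N)" using dv dvd_trans by blast+
  have hom: "\<And>x y. x \<in> Phi N \<Longrightarrow> y \<in> Phi N \<Longrightarrow> cong3 (\<psi> (x \<cdot> y))
              (fst (\<psi> x) + fst (\<psi> y), fst (snd (\<psi> x)) + fst (snd (\<psi> y)),
               snd (snd (\<psi> x)) + snd (snd (\<psi> y))) (Nprime N)"
    and hA: "cong3 (\<psi> (genA [^]\<^bsub>F2\<^esub> N)) (0, 0, 0) (Nprime N)"
    and hB: "cong3 (\<psi> (genB [^]\<^bsub>F2\<^esub> N)) (0, 0, 0) (Nprime N)"
    and hG: "\<And>i j k. cong3 (\<psi> (Gw i j k)) (- i * k, - j * k, k) (Nprime N)"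
    using assms(2) unfolding is_psibar_def Gw_def by blast+
  have pc1: "pc2 N (\<lambda>w. fst (\<psi> w)) m (\<lambda>i j k. - i * k) (\<lambda>i j. i * j)"
    unfolding pc2_def pc_def pc2_axioms_def
    using hom hG by (auto simp: cong3_def cong_iff_dvd_diff m_def algebra_simps)
  have pc2': "pc2 N (\<lambda>w. fst (snd (\<psi> w))) m (\<lambda>i j k. - j * k) (\<lambda>i j. c2 j)"
    unfolding pc2_def pc_def pc2_axioms_def
    using hom hG by (auto simp: cong3_def cong_iff_dvd_diff m_def algebra_simps c2_add)
  have pc3: "pc2 N (\<lambda>w. snd (snd (\<psi> w))) m (\<lambda>i j k. k) (\<lambda>i j. - j)"
    unfolding pc2_def pc_def pc2_axioms_def
    using hom hG by (auto simp: cong3_def cong_iff_dvd_diff m_def algebra_simps)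
  have r1: "\<And>w. w \<in> Phi N \<Longrightarrow> m dvd fst (\<psi> w) - P1 w"
    by (rule pc2.h_final[OF pc1]) (use P_Nil P_snoc hA hB in \<open>auto simp: pc2.sv_def[OF pc1] cong3_def cong_0_iff m_def\<close>)
  have r2: "\<And>w. w \<in> Phi N \<Longrightarrow> m dvd fst (snd (\<psi> w)) - P2 w"
    by (rule pc2.h_final[OF pc2']) (use P_Nil P_snoc hA hB in \<open>auto simp: pc2.sv_def[OF pc2'] cong3_def cong_0_iff m_def\<close>)
  have r3: "\<And>w. w \<in> Phi N \<Longrightarrow> m dvd snd (snd (\<psi> w)) - P3 w"
    by (rule pc2.h_final[OF pc3]) (use P_Nil P_snoc hA hB in \<open>auto simp: pc2.sv_def[OF pc3] cong3_def cong_0_iff m_def\<close>)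
  show "\<forall>\<gamma> \<in> carrier F2. \<gamma> [^]\<^bsub>F2\<^esub> N \<in> Phi2 N \<psi>"
  proof
    fix g assume g: "g \<in> carrier F2"
    define w where "w = g [^]\<^bsub>F2\<^esub> N"
    have wP: "w \<in> Phi N" unfolding w_def Phi_def using g
      by (auto simp: cong_0_iff)
    have p1: "d dvd P1 w" unfolding w_def P_pow(1)[OF g] using dN dv
      by (intro dvd_add dvd_diff dvd_mult dvd_mult2) auto
    have p2: "d dvd P2 w" unfolding w_def P_pow(2)[OF g] using dN dv
      by (intro dvd_add dvd_diff dvd_mult dvd_mult2) auto
    have p3: "m dvd P3 w" unfolding w_def P_pow(3)[OF g] using dv
      by (intro dvd_add dvd_diff dvd_mult dvd_mult2) auto
    have "d dvd fst (\<psi> w) - P1 w" using r1[OF wP] dv dvd_trans by blast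
    then have q1: "d dvd fst (\<psi> w)" using p1 by (metis diff_add_cancel dvd_add)
    have "d dvd fst (snd (\<psi> w)) - P2 w" using r2[OF wP] dv dvd_trans by blast
    then have q2: "d dvd fst (snd (\<psi> w))" using p2 by (metis diff_add_cancel dvd_add)
    have q3: "m dvd snd (snd (\<psi> w))" using r3[OF wP] p3 by (metis diff_add_cancel dvd_add)
    show "g [^]\<^bsub>F2\<^esub> N \<in> Phi2 N \<psi>"
      using wP q1 q2 q3 unfolding w_def[symmetric] Phi2_def d_def m_def by (simp add: cong_0_iff)
  qed
next
  show "\<forall>n::nat. 0 < n \<and> n < N \<longrightarrow> \<not> (\<forall>\<gamma> \<in> carrier F2. \<gamma> [^]\<^bsub>F2\<^esub> n \<in> Phi2 N \<psi>)"
  proof (intro allI impI notI)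
    fix n :: nat assume n: "0 < n \<and> n < N" and all: "\<forall>\<gamma> \<in> carrier F2. \<gamma> [^]\<^bsub>F2\<^esub> n \<in> Phi2 N \<psi>"
    then have "genA [^]\<^bsub>F2\<^esub> n \<in> Phi N" by (auto simp: Phi2_def)
    then have "int N dvd int n" by (simp add: Phi_def cong_0_iff)
    then have "N dvd n" by simp
    then show False using n by (auto dest: dvd_imp_le)
  qed
qed


end
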